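(* Let $G$ be a finite simple graph. Then $G$ is a Tutte-Berge graph if and only if the induced subgraph of $G$ on $D(G)$ has no edges (i.e. $D(G)$ consists of isolated vertices only).
   Context: $\nu(G)$ is the matching number of $G$. For $U\subseteq V(G)$, $N_G(U)$ is the set of vertices of $G$ adjacent to at least one vertex of $U$. A set $T\subseteq V(G)$ is independent if no edge of $G$ has both endpoints in $T$. $G$ is a Tutte-Berge graph if there exists an independent set $T$ of $G$ with $|T| = |N_G(T)| + |V(G)| - 2\nu(G)$. $D(G)$ is the set of vertices of $G$ that are left uncovered by at least one maximum matching of $G$; $A(G)$ is the set of vertices in $V(G)\setminus D(G)$ adjacent to at least one vertex of $D(G)$; $C(G)=V(G)\setminus(D(G)\cup A(G))$ (Gallai–Edmonds decomposition). *)

theory Defs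
  imports Main
begin

definition simple_graph :: "'a set \<Rightarrow> 'a set set \<Rightarrow> bool" where
  "simple_graph V E \<longleftrightarrow> finite V \<and> (\<forall>e\<in>E. e \<subseteq> V \<and> card e = 2)"

definition matching :: "'a set set \<Rightarrow> 'a set set \<Rightarrow> bool" where
  "matching E M \<longleftrightarrow> M \<subseteq> E \<and> (\<forall>e1\<in>M. \<forall>e2\<in>M. e1 \<noteq> e2 \<longrightarrow> e1 \<inter> e2 = {})"

definition matching_number :: "'a set set \<Rightarrow> nat" where
  "matching_number E = Max (card ` {M. matching E M})"

definition max_matching :: "'a set set \<Rightarrow> 'a set set \<Rightarrow> bool" where
  "max_matching E M \<longleftrightarrow> matching E M \<and> card M = matching_number E"

definition neighbourhood :: "'a set \<Rightarrow> 'a set set \<Rightarrow> 'a set \<Rightarrow> 'a set" where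
  "neighbourhood V E U = {v\<in>V. \<exists>u\<in>U. {u, v} \<in> E}"

definition independent :: "'a set \<Rightarrow> 'a set set \<Rightarrow> 'a set \<Rightarrow> bool" where
  "independent V E T \<longleftrightarrow> T \<subseteq> V \<and> (\<forall>u\<in>T. \<forall>v\<in>T. {u, v} \<notin> E)"

definition tutte_berge_graph :: "'a set \<Rightarrow> 'a set set \<Rightarrow> bool" where
  "tutte_berge_graph V E \<longleftrightarrow>
     (\<exists>T. independent V E T \<and>
          int (card T) = int (card (neighbourhood V E T)) + int (card V) - 2 * int (matching_number E))"

definition GE_D :: "'a set \<Rightarrow> 'a set set \<Rightarrow> 'a set" where
  "GE_D V E = {v\<in>V. \<exists>M. max_matching E M \<and> v \<notin> \<Union>M}"

end

theory Submission
  imports Defs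
begin

inductive altp :: "'a set \<Rightarrow> 'a set set \<Rightarrow> 'a set set \<Rightarrow> 'a list \<Rightarrow> bool" for V M F where
  base: "v \<in> V \<Longrightarrow> v \<notin> \<Union>M \<Longrightarrow> altp V M F [v]"
| step: "altp V M F (y # p) \<Longrightarrow> {y,x} \<in> F \<Longrightarrow> {x,v} \<in> M \<Longrightarrow> altp V M F (v # x # y # p)"

lemma altp_mono: "altp V M F q \<Longrightarrow> F \<subseteq> F' \<Longrightarrow> altp V M F' q"
  by (induction rule: altp.induct) (auto intro: altp.intros)

lemma altp_ne: "altp V M F q \<Longrightarrow> q \<noteq> []"
  by (induction rule: altp.induct) auto

lemma altp_tl_F: "altp V M F q \<Longrightarrow> z \<in> set (tl q) \<Longrightarrow> \<exists>e\<in>F. z \<in> e"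
  by (induction rule: altp.induct) auto

lemma altp_split: "altp V M F q \<Longrightarrow> z \<in> set q \<Longrightarrow>
   (\<exists>ys s. q = ys @ s \<and> altp V M F s \<and> hd s = z) \<or>
   (\<exists>ys v s. q = ys @ v # z # s \<and> altp V M F (v # z # s) \<and> {z,v} \<in> M)"
proof (induction rule: altp.induct)
  case (base v)
  then show ?case using altp.base[of v V M F] by (metis append_Nil empty_iff empty_set list.sel(1) set_ConsD)
next
  case (step y p x v)
  have A: "altp V M F (v # x # y # p)" using step.hyps by (rule altp.step)
  show ?case
  proof (cases "z = v")
    case True then show ?thesis using A by (metis append_Nil list.sel(1))
  next
    case False
    show ?thesis
    proof (cases "z = x")
      case True then show ?thesis using step.hyps A by (metis append_Nil)
    next
      case False
      with \<open>z \<noteq> v\<close> step.prems have "z \<in> set (y # p)" by auto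
      from step.IH[OF this] show ?thesis
        by (metis append_Cons)
    qed
  qed
qed

lemma dj_helper: "\<forall>e1\<in>M. \<forall>e2\<in>M. e1 \<noteq> e2 \<longrightarrow> e1 \<inter> e2 = {} \<Longrightarrow> e \<in> M \<Longrightarrow> f \<in> M \<Longrightarrow> e \<noteq> f \<Longrightarrow> z \<in> e \<Longrightarrow> z \<in> f \<Longrightarrow> False"
  by (metis disjoint_iff)

definition partner :: "'a set set \<Rightarrow> 'a \<Rightarrow> 'a" where
  "partner M v = (SOME u. {v,u} \<in> M)"

locale sgraph =
  fixes V :: "'a set" and E :: "'a set set"
  assumes sg: "simple_graph V E"
begin

lemma finV: "finite V" using sg unfolding simple_graph_def by auto

lemma edge: "e \<in> E \<Longrightarrow> e \<subseteq> V \<and> card e = 2" using sg unfolding simple_graph_def by auto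

lemma finE: "finite E"
proof -
  have "E \<subseteq> Pow V" using edge by auto
  then show ?thesis using finV finite_subset by blast
qed

lemma edge_ne: "{u,v} \<in> E \<Longrightarrow> u \<noteq> v"
  using edge by fastforce

lemma edge_V: "{u,v} \<in> E \<Longrightarrow> u \<in> V \<and> v \<in> V"
  using edge by blast

lemma edge_obtain: assumes "e \<in> E" "z \<in> e" shows "\<exists>u. e = {z,u} \<and> u \<noteq> z"
proof -
  from edge[OF assms(1)] obtain x y where "e = {x,y}" "x \<noteq> y" by (auto simp: card_2_iff)
  then show ?thesis using assms(2) by auto
qed

lemma matching_fin: "matching E M \<Longrightarrow> finite M"
  unfolding matching_def using finE finite_subset by blast

lemma fin_matchings: "finite (card ` {M. matching E M})"
proof -
  have "{M. matching E M} \<subseteq> Pow E" unfolding matching_def by auto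
  then show ?thesis using finE by (meson finite_Pow_iff finite_imageI finite_subset)
qed

lemma nu_ge: "matching E M \<Longrightarrow> card M \<le> matching_number E"
  unfolding matching_number_def using fin_matchings by auto

lemma nu_ex: "\<exists>M. max_matching E M"
proof -
  have "matching E {}" unfolding matching_def by auto
  then have "card ` {M. matching E M} \<noteq> {}" by auto
  from Max_in[OF fin_matchings this] show ?thesis
    unfolding max_matching_def matching_number_def by auto
qed

lemma match_uniq: assumes "matching E M" "{a,w} \<in> M" "{a,v} \<in> M" shows "v = w"
proof -
  have dj: "\<forall>e1\<in>M. \<forall>e2\<in>M. e1 \<noteq> e2 \<longrightarrow> e1 \<inter> e2 = {}" using assms(1) unfolding matching_def by simp
  have "a \<in> {a,w} \<inter> {a,v}" by simp
  then have eq: "{a,w} = {a,v}" using dj assms(2,3) by (metis empty_iff)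
  have "{a,v} \<in> E" using assms(1,3) unfolding matching_def by (meson subsetD)
  then have "a \<noteq> v" by (rule edge_ne)
  moreover have "v \<in> {a,w}" using eq by simp
  ultimately show ?thesis by simp
qed

lemma match_sub: assumes "matching E M" shows "\<Union>M \<subseteq> V"
proof
  fix x assume "x \<in> \<Union>M"
  then obtain e where "e \<in> M" "x \<in> e" by auto
  moreover have "M \<subseteq> E" using assms unfolding matching_def by simp
  ultimately show "x \<in> V" using edge by blast
qed

lemma edge_fin: "e \<in> E \<Longrightarrow> finite e"
  using edge finV finite_subset by metis

lemma card_Union_M: assumes "matching E M" shows "card (\<Union>M) = 2 * card M"
proof -
  have ME: "M \<subseteq> E" using assms unfolding matching_def by simp
  have "pairwise disjnt M" using assms unfolding matching_def pairwise_def disjnt_def by simp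
  moreover have "\<And>A. A \<in> M \<Longrightarrow> finite A" using ME edge_fin by blast
  ultimately have "card (\<Union>M) = sum card M" by (rule card_Union_disjoint)
  also have "\<dots> = sum (\<lambda>_. 2) M" using ME edge
    by (intro sum.cong) auto
  finally show ?thesis by simp
qed

lemma partner: assumes "matching E M" "v \<in> \<Union>M" shows "{v, partner M v} \<in> M"
proof -
  obtain e where e: "e \<in> M" "v \<in> e" using assms by auto
  then have "e \<in> E" using assms unfolding matching_def by auto
  then obtain u where "e = {v,u}" using edge_obtain e by blast
  then show ?thesis unfolding partner_def using e by (metis someI)
qed

lemma partner_eq: "matching E M \<Longrightarrow> {v,u} \<in> M \<Longrightarrow> partner M v = u"
  using partner match_uniq by blast

lemma altp_hd_V: "altp V M F q \<Longrightarrow> matching E M \<Longrightarrow> hd q \<in> V"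
  by (induction rule: altp.induct) (auto simp: matching_def dest: edge_V)

lemma flip:
  assumes "altp V M F q" "F \<subseteq> E" "matching E M" "distinct q"
  shows "\<exists>M'. matching E M' \<and> card M' = card M \<and> hd q \<notin> \<Union>M' \<and> (\<forall>e\<in>M. e \<inter> set q = {} \<longrightarrow> e \<in> M')"
  using assms
proof (induction rule: altp.induct)
  case (base v)
  then show ?case by (intro exI[of _ M]) simp
next
  case (step y p x v)
  from step.prems have d: "distinct (y # p)" "x \<notin> set (y#p)" "v \<notin> set (y#p)" "v \<noteq> x" by auto
  from step.IH[OF step.prems(1,2) d(1)] obtain M1 where
    M1: "matching E M1" "card M1 = card M" "hd (y#p) \<notin> \<Union>M1" "\<forall>e\<in>M. e \<inter> set (y#p) = {} \<longrightarrow> e \<in> M1"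
    by blast
  have M1y: "y \<notin> \<Union>M1" using M1(3) by simp
  have "{x,v} \<inter> set (y#p) = {}" using d(2,3) by simp
  then have xv: "{x,v} \<in> M1" using M1(4) step.hyps(3) by blast
  have yx: "{y,x} \<in> E" using step.hyps(2) step.prems(1) by blast
  have M1E: "M1 \<subseteq> E" and dj1: "\<forall>e1\<in>M1. \<forall>e2\<in>M1. e1 \<noteq> e2 \<longrightarrow> e1 \<inter> e2 = {}"
    using M1(1) unfolding matching_def by simp_all
  define M2 where "M2 = insert {y,x} (M1 - {{x,v}})"
  have xe: "x \<notin> e" if "e \<in> M1" "e \<noteq> {x,v}" for e
  proof
    assume "x \<in> e"
    then show False using dj_helper[OF dj1 that(1) xv that(2) \<open>x \<in> e\<close>] by simp
  qed
  have ve: "v \<notin> e" if "e \<in> M1" "e \<noteq> {x,v}" for e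
  proof
    assume "v \<in> e"
    then show False using dj_helper[OF dj1 that(1) xv that(2) \<open>v \<in> e\<close>] by simp
  qed
  have ye: "y \<notin> e" if "e \<in> M1" for e using M1y that by blast
  have m2: "matching E M2"
    unfolding matching_def
  proof (intro conjI ballI impI)
    show "M2 \<subseteq> E" using yx M1E unfolding M2_def by blast
  next
    fix e1 e2 assume e: "e1 \<in> M2" "e2 \<in> M2" "e1 \<noteq> e2"
    show "e1 \<inter> e2 = {}"
    proof (cases "e1 = {y,x}")
      case True
      then have "e2 \<in> M1" "e2 \<noteq> {x,v}" using e unfolding M2_def by auto
      then show ?thesis using True xe ye by auto
    next
      case False
      then have e1: "e1 \<in> M1" "e1 \<noteq> {x,v}" using e unfolding M2_def by auto
      show ?thesis
      proof (cases "e2 = {y,x}")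
        case True
        then show ?thesis using e1 xe ye by auto
      next
        case False
        then have "e2 \<in> M1" using e unfolding M2_def by auto
        then show ?thesis using e1 e(3) dj1 by blast
      qed
    qed
  qed
  have fin: "finite M1" using M1(1) matching_fin by blast
  have "{y,x} \<notin> M1 - {{x,v}}" using M1y by blast
  moreover have "card M1 > 0" using fin xv card_gt_0_iff by blast
  ultimately have "card M2 = card M1" unfolding M2_def using fin xv
    by (simp add: card_Suc_Diff1)
  moreover have "v \<notin> \<Union>M2"
  proof
    assume "v \<in> \<Union>M2"
    then obtain e where e: "e \<in> M2" "v \<in> e" by blast
    have "v \<noteq> y" "v \<noteq> x" using step.prems(3) by auto
    then have "e \<noteq> {y,x}" using e(2) by auto
    then have "e \<in> M1" "e \<noteq> {x,v}" using e(1) unfolding M2_def by auto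
    then show False using ve e(2) by blast
  qed
  moreover have "\<forall>e\<in>M. e \<inter> set (v # x # y # p) = {} \<longrightarrow> e \<in> M2"
  proof (intro ballI impI)
    fix e assume "e \<in> M" "e \<inter> set (v # x # y # p) = {}"
    then have "e \<in> M1" "e \<noteq> {x,v}" using M1(4) by auto
    then show "e \<in> M2" unfolding M2_def by blast
  qed
  ultimately show ?case using m2 M1(2) by (metis list.sel(1))
qed

lemma in_D:
  assumes "altp V M F q" "F \<subseteq> E" "max_matching E M" "distinct q"
  shows "hd q \<in> GE_D V E"
proof -
  have m: "matching E M" using assms(3) unfolding max_matching_def by auto
  from flip[OF assms(1,2) m assms(4)] obtain M' where
    "matching E M'" "card M' = card M" "hd q \<notin> \<Union>M'" by auto
  moreover have "hd q \<in> V" using altp_hd_V assms(1) m by auto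
  ultimately show ?thesis using assms(3) unfolding GE_D_def max_matching_def by auto
qed

lemma construct:
  assumes m: "matching E M"
  shows "max_matching E N \<Longrightarrow> d \<in> V \<Longrightarrow> d \<notin> \<Union>N \<Longrightarrow> \<exists>q. altp V M (N - M) q \<and> distinct q \<and> hd q = d"
proof (induction "card (N - M)" arbitrary: N d rule: less_induct)
  case less
  have mN: "matching E N" and cN: "card N = matching_number E" using less.prems(1) unfolding max_matching_def by auto
  have NE: "N \<subseteq> E" and djN: "\<forall>e1\<in>N. \<forall>e2\<in>N. e1 \<noteq> e2 \<longrightarrow> e1 \<inter> e2 = {}"
    using mN unfolding matching_def by simp_all
  have ME: "M \<subseteq> E" using m unfolding matching_def by simp
  show ?case
  proof (cases "d \<in> \<Union>M")
    case False
    then have "altp V M (N - M) [d]" using less.prems(2) by (rule_tac altp.base) auto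
    then show ?thesis by (intro exI[of _ "[d]"]) auto
  next
    case True
    then obtain e where e: "e \<in> M" "d \<in> e" by blast
    then obtain x where ex: "e = {d,x}" "x \<noteq> d" using edge_obtain ME by blast
    have dxM: "{d,x} \<in> M" using e ex by simp
    have dxE: "{d,x} \<in> E" using dxM ME by blast
    have finN: "finite N" using mN matching_fin by blast
    have xN: "x \<in> \<Union>N"
    proof (rule ccontr)
      assume xn: "x \<notin> \<Union>N"
      have "matching E (insert {d,x} N)"
        unfolding matching_def
      proof (intro conjI ballI impI)
        show "insert {d, x} N \<subseteq> E" using NE dxE by blast
      next
        fix e1 e2 assume "e1 \<in> insert {d, x} N" "e2 \<in> insert {d, x} N" "e1 \<noteq> e2"
        then show "e1 \<inter> e2 = {}" using djN xn less.prems(3) by blast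
      qed
      then have "card (insert {d,x} N) \<le> matching_number E" by (rule nu_ge)
      moreover have "{d,x} \<notin> N" using less.prems(3) by blast
      then have "card (insert {d,x} N) = card N + 1" using finN by simp
      ultimately show False using cN by simp
    qed
    then obtain f where f: "f \<in> N" "x \<in> f" by blast
    then obtain y where fy: "f = {x,y}" "y \<noteq> x" using edge_obtain NE by blast
    have xyN: "{x,y} \<in> N" using f fy by simp
    have yd: "y \<noteq> d" using less.prems(3) xyN by blast
    have xyM: "{x,y} \<notin> M"
    proof
      assume "{x,y} \<in> M"
      moreover have "{x,d} \<in> M" using dxM by (simp add: insert_commute)
      ultimately have "d = y" using match_uniq[OF m] by blast
      then show False using yd by simp
    qed
    have xg: "x \<notin> g" if "g \<in> N" "g \<noteq> {x,y}" for g
    proof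
      assume "x \<in> g"
      then show False using dj_helper[OF djN that(1) xyN that(2) \<open>x \<in> g\<close>] by simp
    qed
    have yg: "y \<notin> g" if "g \<in> N" "g \<noteq> {x,y}" for g
    proof
      assume "y \<in> g"
      then show False using dj_helper[OF djN that(1) xyN that(2) \<open>y \<in> g\<close>] by simp
    qed
    have dg: "d \<notin> g" if "g \<in> N" for g using less.prems(3) that by blast
    define N1 where "N1 = insert {d,x} (N - {{x,y}})"
    have mN1: "matching E N1"
      unfolding matching_def
    proof (intro conjI ballI impI)
      show "N1 \<subseteq> E" using NE dxE unfolding N1_def by blast
    next
      fix e1 e2 assume e: "e1 \<in> N1" "e2 \<in> N1" "e1 \<noteq> e2"
      show "e1 \<inter> e2 = {}"
      proof (cases "e1 = {d,x}")
        case True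
        then have "e2 \<in> N" "e2 \<noteq> {x,y}" using e unfolding N1_def by auto
        then show ?thesis using True xg dg by auto
      next
        case False
        then have e1: "e1 \<in> N" "e1 \<noteq> {x,y}" using e unfolding N1_def by auto
        show ?thesis
        proof (cases "e2 = {d,x}")
          case True
          then show ?thesis using e1 xg dg by auto
        next
          case False
          then have "e2 \<in> N" using e unfolding N1_def by auto
          then show ?thesis using e1 e(3) djN by blast
        qed
      qed
    qed
    have "{d,x} \<notin> N - {{x,y}}" using less.prems(3) by blast
    moreover have "card N > 0" using finN xyN card_gt_0_iff by blast
    ultimately have "card N1 = card N" unfolding N1_def using finN xyN
      by (simp add: card_Suc_Diff1)
    then have maxN1: "max_matching E N1" using mN1 cN unfolding max_matching_def by simp
    have yN1: "y \<notin> \<Union>N1"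
    proof
      assume "y \<in> \<Union>N1"
      then obtain g where g: "g \<in> N1" "y \<in> g" by blast
      have "g \<noteq> {d,x}" using g(2) yd fy(2) by auto
      then have "g \<in> N" "g \<noteq> {x,y}" using g(1) unfolding N1_def by auto
      then show False using yg g(2) by blast
    qed
    have yV: "y \<in> V" using xyN NE edge_V by blast
    have N1M: "N1 - M = (N - M) - {{x,y}}" unfolding N1_def using dxM by auto
    have "card (N1 - M) < card (N - M)" unfolding N1M
      using finN xyN xyM by (intro card_Diff1_less) auto
    from less.hyps[OF this maxN1 yV yN1] obtain q1 where
      q1: "altp V M (N1 - M) q1" "distinct q1" "hd q1 = y" by blast
    have q1ne: "q1 \<noteq> []" using altp_ne q1(1) by blast
    then obtain p where qp: "q1 = y # p" using q1(3) by (cases q1) auto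
    have "N1 - M \<subseteq> N - M" unfolding N1M by blast
    then have A1: "altp V M (N - M) (y # p)" using altp_mono q1(1) qp by blast
    have yxF: "{y,x} \<in> N - M" using xyN xyM by (simp add: insert_commute)
    have xdM: "{x,d} \<in> M" using dxM by (simp add: insert_commute)
    have A: "altp V M (N - M) (d # x # y # p)" using altp.step[OF A1 yxF xdM] .
    have N1g: "g = {d,x}" if "g \<in> N1" "z \<in> g" "z = d \<or> z = x" for g z
    proof (rule ccontr)
      assume "g \<noteq> {d,x}"
      then have "g \<in> N" "g \<noteq> {x,y}" using that(1) unfolding N1_def by auto
      then show False using that(2,3) xg dg by blast
    qed
    have dnot: "d \<notin> set q1"
    proof
      assume "d \<in> set q1"
      then have "d \<in> set (tl q1)" using qp yd by auto
      then obtain g where g: "g \<in> N1" "g \<notin> M" "d \<in> g" using altp_tl_F[OF q1(1)] by blast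
      then have "g = {d,x}" using N1g[of g d] by simp
      then show False using g(2) dxM by simp
    qed
    have xnot: "x \<notin> set q1"
    proof
      assume "x \<in> set q1"
      then have "x \<in> set (tl q1)" using qp fy(2) by auto
      then obtain g where g: "g \<in> N1" "g \<notin> M" "x \<in> g" using altp_tl_F[OF q1(1)] by blast
      then have "g = {d,x}" using N1g[of g x] by simp
      then show False using g(2) dxM by simp
    qed
    have "distinct (d # x # y # p)" using q1(2) qp dnot xnot ex(2) by auto
    then show ?thesis using A by (intro exI[of _ "d # x # y # p"]) auto
  qed
qed

lemma main:
  assumes M: "max_matching E M" and a: "a \<notin> GE_D V E" and d: "d \<in> GE_D V E"
    and da: "{d,a} \<in> E" and aw: "{a,w} \<in> M"
  shows "w \<in> GE_D V E"
proof -
  have m: "matching E M" using M unfolding max_matching_def by simp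
  obtain N where N: "max_matching E N" "d \<notin> \<Union>N" and dV: "d \<in> V" using d unfolding GE_D_def by blast
  have NE: "N - M \<subseteq> E" using N(1) unfolding max_matching_def matching_def by blast
  obtain q where q: "altp V M (N - M) q" "distinct q" "hd q = d" using construct[OF m N(1) dV N(2)] by blast
  have wa: "{w,a} \<in> M" using aw by (simp add: insert_commute)
  show ?thesis
  proof (cases "a \<in> set q")
    case True
    from altp_split[OF q(1) True] show ?thesis
    proof
      assume "\<exists>ys s. q = ys @ s \<and> altp V M (N - M) s \<and> hd s = a"
      then obtain ys s where "q = ys @ s" "altp V M (N - M) s" "hd s = a" by blast
      moreover then have "distinct s" using q(2) by simp
      ultimately have "a \<in> GE_D V E" using in_D[OF _ NE M] by metis
      then show ?thesis using a by simp
    next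
      assume "\<exists>ys v s. q = ys @ v # a # s \<and> altp V M (N - M) (v # a # s) \<and> {a,v} \<in> M"
      then obtain ys v s where vs: "q = ys @ v # a # s" "altp V M (N - M) (v # a # s)" "{a,v} \<in> M" by blast
      have "v = w" using match_uniq[OF m aw vs(3)] .
      have "distinct (v # a # s)" using q(2) vs(1) by simp
      then have "hd (v # a # s) \<in> GE_D V E" using in_D[OF vs(2) NE M] by blast
      then show ?thesis using \<open>v = w\<close> by simp
    qed
  next
    case anot: False
    show ?thesis
    proof (cases "w \<in> set q")
      case True
      from altp_split[OF q(1) True] show ?thesis
      proof
        assume "\<exists>ys s. q = ys @ s \<and> altp V M (N - M) s \<and> hd s = w"
        then obtain ys s where "q = ys @ s" "altp V M (N - M) s" "hd s = w" by blast
        moreover then have "distinct s" using q(2) by simp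
        ultimately show ?thesis using in_D[OF _ NE M] by metis
      next
        assume "\<exists>ys v s. q = ys @ v # w # s \<and> altp V M (N - M) (v # w # s) \<and> {w,v} \<in> M"
        then obtain ys v s where vs: "q = ys @ v # w # s" "{w,v} \<in> M" by blast
        have "v = a" using match_uniq[OF m wa vs(2)] .
        then show ?thesis using anot vs(1) by simp
      qed
    next
      case wnot: False
      have q1: "altp V M E q" using altp_mono[OF q(1) NE] .
      obtain p where qp: "q = d # p" using q(3) altp_ne[OF q(1)] by (cases q) auto
      have A: "altp V M E (w # a # d # p)" using altp.step[OF q1[unfolded qp] da aw] .
      have wa_ne: "w \<noteq> a" using aw m edge_ne unfolding matching_def by blast
      have "distinct (w # a # d # p)" using q(2) qp anot wnot wa_ne by auto
      then have "hd (w # a # d # p) \<in> GE_D V E" using in_D[OF A _ M] by blast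
      then show ?thesis by simp
    qed
  qed
qed

lemma card_exposed:
  assumes M: "max_matching E M"
  shows "int (card (V - \<Union>M)) = int (card V) - 2 * int (matching_number E)"
proof -
  have m: "matching E M" and c: "card M = matching_number E" using M unfolding max_matching_def by auto
  have sub: "\<Union>M \<subseteq> V" using match_sub[OF m] .
  have fin: "finite (\<Union>M)" using sub finV finite_subset by blast
  have cU: "card (\<Union>M) = 2 * matching_number E" using card_Union_M[OF m] c by simp
  have le: "card (\<Union>M) \<le> card V" using card_mono[OF finV sub] .
  have "card (V - \<Union>M) = card V - card (\<Union>M)" using card_Diff_subset[OF fin sub] .
  then show ?thesis using le cU by simp
qed

lemma partner_inj: assumes m: "matching E M" shows "inj_on (partner M) (\<Union>M)"
proof (rule inj_onI)
  fix t1 t2 assume t: "t1 \<in> \<Union>M" "t2 \<in> \<Union>M" "partner M t1 = partner M t2"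
  have "{t1, partner M t1} \<in> M" using partner[OF m t(1)] .
  then have 1: "{partner M t1, t1} \<in> M" by (simp add: insert_commute)
  have "{t2, partner M t1} \<in> M" using partner[OF m t(2)] t(3) by simp
  then have 2: "{partner M t1, t2} \<in> M" by (simp add: insert_commute)
  show "t1 = t2" using match_uniq[OF m 2 1] by simp
qed

lemma partner_nb: assumes m: "matching E M" "t \<in> \<Union>M" "t \<in> T"
  shows "partner M t \<in> neighbourhood V E T"
proof -
  have "{t, partner M t} \<in> M" using partner[OF m(1,2)] .
  then have "{t, partner M t} \<in> E" using m(1) unfolding matching_def by blast
  then show ?thesis unfolding neighbourhood_def using edge_V m(3) by blast
qed

lemma partner_cov: assumes m: "matching E M" "t \<in> \<Union>M" shows "partner M t \<in> \<Union>M"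
  using partner[OF m] by blast

end

theorem theorem1p3:
  fixes V :: "'a set" and E :: "'a set set"
  assumes "simple_graph V E"
  shows "tutte_berge_graph V E \<longleftrightarrow> (\<forall>u\<in>GE_D V E. \<forall>v\<in>GE_D V E. {u, v} \<notin> E)"
proof -
  interpret sgraph V E using assms by unfold_locales
  show ?thesis
  proof
    assume "tutte_berge_graph V E"
    then obtain T where T: "independent V E T" and
      eq: "int (card T) = int (card (neighbourhood V E T)) + int (card V) - 2 * int (matching_number E)"
      unfolding tutte_berge_graph_def by blast
    have TV: "T \<subseteq> V" and Tind: "\<forall>u\<in>T. \<forall>v\<in>T. {u,v} \<notin> E" using T unfolding independent_def by auto
    have finT: "finite T" using TV finV finite_subset by blast
    have DT: "GE_D V E \<subseteq> T"
    proof
      fix d assume "d \<in> GE_D V E"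
      then obtain M where M: "max_matching E M" "d \<notin> \<Union>M" and dV: "d \<in> V" unfolding GE_D_def by blast
      have m: "matching E M" using M(1) unfolding max_matching_def by simp
      define X where "X = V - \<Union>M"
      have cX: "int (card X) = int (card V) - 2 * int (matching_number E)" unfolding X_def using card_exposed[OF M(1)] .
      have finX: "finite X" unfolding X_def using finV by simp
      have finNT: "finite (neighbourhood V E T)" using finV unfolding neighbourhood_def by simp
      have "inj_on (partner M) (T \<inter> \<Union>M)" using partner_inj[OF m] inj_on_subset by blast
      moreover have "partner M ` (T \<inter> \<Union>M) \<subseteq> neighbourhood V E T" using partner_nb[OF m] by blast
      ultimately have c1: "card (T \<inter> \<Union>M) \<le> card (neighbourhood V E T)"
        using card_inj_on_le finNT by blast
      have "T = (T \<inter> X) \<union> (T \<inter> \<Union>M)" using TV unfolding X_def by blast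
      moreover have "(T \<inter> X) \<inter> (T \<inter> \<Union>M) = {}" unfolding X_def by blast
      ultimately have "card T = card (T \<inter> X) + card (T \<inter> \<Union>M)"
        using finT card_Un_disjoint by (metis finite_Int)
      then have "card X \<le> card (T \<inter> X)" using eq cX c1 by linarith
      then have "T \<inter> X = X" using card_seteq[OF finX] by blast
      moreover have "d \<in> X" unfolding X_def using dV M(2) by blast
      ultimately show "d \<in> T" by blast
    qed
    show "\<forall>u\<in>GE_D V E. \<forall>v\<in>GE_D V E. {u, v} \<notin> E" using DT Tind by blast
  next
    assume ind: "\<forall>u\<in>GE_D V E. \<forall>v\<in>GE_D V E. {u, v} \<notin> E"
    define D where "D = GE_D V E"
    have DV: "D \<subseteq> V" unfolding D_def GE_D_def by blast
    have finD: "finite D" using DV finV finite_subset by blast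
    obtain M where M: "max_matching E M" using nu_ex by blast
    have m: "matching E M" using M unfolding max_matching_def by simp
    define X where "X = V - \<Union>M"
    have cX: "int (card X) = int (card V) - 2 * int (matching_number E)" unfolding X_def using card_exposed[OF M] .
    have XD: "X \<subseteq> D" unfolding X_def D_def GE_D_def using M by blast
    have "bij_betw (partner M) (D \<inter> \<Union>M) (neighbourhood V E D)"
      unfolding bij_betw_def
    proof
      show "inj_on (partner M) (D \<inter> \<Union>M)" using partner_inj[OF m] inj_on_subset by blast
      show "partner M ` (D \<inter> \<Union>M) = neighbourhood V E D"
      proof
        show "partner M ` (D \<inter> \<Union>M) \<subseteq> neighbourhood V E D" using partner_nb[OF m] by blast
      next
        show "neighbourhood V E D \<subseteq> partner M ` (D \<inter> \<Union>M)"
        proof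
          fix a assume "a \<in> neighbourhood V E D"
          then obtain u where a: "a \<in> V" "u \<in> D" "{u,a} \<in> E" unfolding neighbourhood_def by blast
          have aD: "a \<notin> D" using ind a(2,3) unfolding D_def by blast
          have aM: "a \<in> \<Union>M" using aD XD a(1) unfolding X_def by blast
          define w where "w = partner M a"
          have aw: "{a,w} \<in> M" unfolding w_def using partner[OF m aM] .
          have wD: "w \<in> D" using main[OF M aD[unfolded D_def] a(2)[unfolded D_def] a(3) aw] unfolding D_def .
          have wM: "w \<in> \<Union>M" using aw by blast
          have "partner M w = a" using partner_eq[OF m] aw by (simp add: insert_commute)
          then show "a \<in> partner M ` (D \<inter> \<Union>M)" using wD wM by (metis IntI imageI)
        qed
      qed
    qed
    then have c1: "card (D \<inter> \<Union>M) = card (neighbourhood V E D)" by (rule bij_betw_same_card)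
    have "D = X \<union> (D \<inter> \<Union>M)" using DV XD unfolding X_def by blast
    moreover have "X \<inter> (D \<inter> \<Union>M) = {}" unfolding X_def by blast
    ultimately have "card D = card X + card (D \<inter> \<Union>M)"
      using finD card_Un_disjoint by (metis finite_Int finite_subset XD)
    then have eq: "int (card D) = int (card (neighbourhood V E D)) + int (card V) - 2 * int (matching_number E)"
      using cX c1 by linarith
    have "independent V E D" unfolding independent_def using DV ind unfolding D_def by blast
    then show "tutte_berge_graph V E" unfolding tutte_berge_graph_def using eq by blast
  qed
qed

end
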